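(* Let $C\subseteq\mathbb{F}_q^n$ be a linear code, $t\ge 0$ an integer, and $A,B\subseteq\mathbb{F}_q^n$ linear codes satisfying $A*B\subseteq C^\perp$, $\dim A>t$, $\mathrm{d}(A^\perp)>t$ and $\mathrm{d}(A)+\mathrm{d}(C)>n$. Let $\mathbf{y}=\mathbf{c}+\mathbf{e}$ with $\mathbf{c}\in C$, $\mathrm{w}(\mathbf{e})=t$, $I_{\mathbf{e}}=\mathrm{supp}(\mathbf{e})$, and let $M=M_1\cap M_2$ where $M_1=\{\mathbf{a}\in A\mid \langle \mathbf{a}*\mathbf{y},\mathbf{b}\rangle=0\ \forall \mathbf{b}\in B\}$ and $M_2=\{\mathbf{a}\in A\mid \langle \mathbf{a}*\mathbf{y}^2,\mathbf{v}\rangle=0\ \forall \mathbf{v}\in (B^{\perp}*C)^{\perp}\}$. If $A(I_{\mathbf{e}})=M$, then $\dim B+\dim (B^\perp*C)^\perp\ge t$.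
   Context: All codes are $\mathbb{F}_q$-linear subspaces of $\mathbb{F}_q^n$. $\mathbf{u}*\mathbf{v}=(u_1v_1,\dots,u_nv_n)$, $\mathbf{u}^i=(u_1^i,\dots,u_n^i)$; $A*B$ is the span of all $\mathbf{a}*\mathbf{b}$; $\langle\mathbf{u},\mathbf{v}\rangle=\sum_iu_iv_i$, $X^\perp$ the dual. $\mathrm{w}$ Hamming weight, $\mathrm{d}$ minimum distance, $\mathrm{supp}(\mathbf{x})=\{i:x_i\ne0\}$. For $J\subseteq\{1,\dots,n\}$, $A(J)=\{\mathbf{a}\in A: a_j=0\ \forall j\in J\}\subseteq\mathbb{F}_q^n$. *)

theory Defs
  imports "HOL-Analysis.Analysis" "HOL-Library.Extended_Nat"
begin

text \<open>Vectors of F_q^n are modelled as 'a ^ 'n with 'a a finite field and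
 n = CARD('n). Codes are subspaces w.r.t. vec.subspace, dimension is vec.dim.\<close>

definition schur :: "'a::field ^ 'n \<Rightarrow> 'a ^ 'n \<Rightarrow> 'a ^ 'n" where
  "schur u v = (\<chi> i. u $ i * v $ i)"

definition schur_codes :: "('a::field ^ 'n) set \<Rightarrow> ('a ^ 'n) set \<Rightarrow> ('a ^ 'n) set" where
  "schur_codes A B = vec.span {schur a b | a b. a \<in> A \<and> b \<in> B}"

definition dotp :: "'a::field ^ 'n \<Rightarrow> 'a ^ 'n \<Rightarrow> 'a" where
  "dotp u v = (\<Sum>i\<in>UNIV. u $ i * v $ i)"

definition dual_code :: "('a::field ^ 'n) set \<Rightarrow> ('a ^ 'n) set" where
  "dual_code X = {u. \<forall>x\<in>X. dotp u x = 0}"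

definition supp :: "'a::zero ^ 'n \<Rightarrow> 'n set" where
  "supp x = {i. x $ i \<noteq> 0}"

definition weight :: "'a::zero ^ 'n \<Rightarrow> nat" where
  "weight x = card (supp x)"

text \<open>Minimum distance; the zero code has minimum distance infinity.\<close>
definition min_dist :: "('a::zero ^ 'n) set \<Rightarrow> enat" where
  "min_dist X = (INF x\<in>X - {0}. enat (weight x))"

definition shortened :: "('a::zero ^ 'n) set \<Rightarrow> 'n set \<Rightarrow> ('a ^ 'n) set" where
  "shortened A J = {a\<in>A. \<forall>j\<in>J. a $ j = 0}"

end

theory Submission
  imports Defs
begin

lemma dotp_diff_scale: "dotp (x - c *s u) w = dotp x w - c * dotp u w"
  unfolding dotp_def by (simp add: sum_subtractf sum_distrib_left algebra_simps)

lemma dotp_schur: "dotp (schur a y) b = dotp a (schur y b)"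
  unfolding dotp_def schur_def by (simp add: mult.assoc)

lemma subspace_ortho: "vec.subspace {x. dotp u x = (0::'a::field)}"
  unfolding vec.subspace_def dotp_def
  by (auto simp: sum.distrib distrib_left mult.left_commute[of "u $ i" for i] simp flip: sum_distrib_left)

lemma dotp_span_zero:
  assumes "x \<in> vec.span S" "\<forall>b\<in>S. dotp u b = (0::'a::field)"
  shows "dotp u x = 0"
  using vec.span_induct[OF assms(1) subspace_ortho[of u]] assms(2) by auto

lemma subspace_int_ortho:
  assumes "vec.subspace (S :: ('a::field ^ 'n) set)"
  shows "vec.subspace (S \<inter> {a. dotp a w = 0})"
  using assms unfolding vec.subspace_def dotp_def
  by (auto simp: sum.distrib distrib_right mult.assoc simp flip: sum_distrib_left)

lemma L1:
  assumes S: "vec.subspace (S :: ('a::field ^ 'n) set)"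
  shows "vec.dim S \<le> vec.dim (S \<inter> {a. dotp a w = 0}) + 1"
proof (cases "\<forall>u\<in>S. dotp u w = 0")
  case True
  then have "S \<inter> {a. dotp a w = 0} = S" by auto
  then show ?thesis by simp
next
  case False
  then obtain u0 where u0: "u0 \<in> S" "dotp u0 w \<noteq> 0" by auto
  let ?S' = "S \<inter> {a. dotp a w = 0}"
  have "S \<subseteq> vec.span (insert u0 ?S')"
  proof
    fix u assume u: "u \<in> S"
    define c where "c = dotp u w / dotp u0 w"
    have "u - c *s u0 \<in> ?S'"
      using u u0 S dotp_diff_scale[of u c u0 w]
      by (simp add: c_def vec.subspace_diff vec.subspace_scale)
    then have "u - c *s u0 \<in> vec.span (insert u0 ?S')" by (simp add: vec.span_base)
    moreover have "c *s u0 \<in> vec.span (insert u0 ?S')" by (simp add: vec.span_base vec.span_scale)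
    ultimately have "(u - c *s u0) + c *s u0 \<in> vec.span (insert u0 ?S')" by (rule vec.span_add)
    then show "u \<in> vec.span (insert u0 ?S')" by simp
  qed
  then have "vec.dim S \<le> vec.dim (insert u0 ?S')"
    by (metis vec.dim_span vec.dim_subset)
  also have "\<dots> \<le> vec.dim ?S' + 1" by (simp add: vec.dim_insert)
  finally show ?thesis .
qed

lemma L:
  assumes "finite W" "vec.subspace (A :: ('a::field ^ 'n) set)"
  shows "vec.dim A \<le> vec.dim (A \<inter> {a. \<forall>w\<in>W. dotp a w = 0}) + card W"
  using assms(1)
proof (induction W rule: finite_induct)
  case empty then show ?case by simp
next
  case (insert w W)
  let ?S = "A \<inter> {a. \<forall>w\<in>W. dotp a w = 0}"
  have sub: "vec.subspace ?S"
  proof -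
    have "vec.subspace {a. \<forall>w\<in>W. dotp a w = 0}"
      unfolding vec.subspace_def dotp_def
      by (auto simp: sum.distrib distrib_right mult.assoc simp flip: sum_distrib_left)
    then show ?thesis using assms(2) vec.subspace_inter by blast
  qed
  have eq: "A \<inter> {a. \<forall>w\<in>insert w W. dotp a w = 0} = ?S \<inter> {a. dotp a w = 0}" by auto
  show ?case using insert L1[OF sub, of w] eq by simp
qed

lemma E:
  fixes A :: "('a::field ^ 'n) set"
  assumes A: "vec.subspace A" and md: "enat t < min_dist (dual_code A)"
    and cP: "card P \<le> t" and jP: "j \<in> P"
  shows "\<exists>a\<in>A. a $ j \<noteq> 0 \<and> (\<forall>k\<in>P-{j}. a $ k = 0)"
proof (rule ccontr)
  assume H: "\<not> ?thesis"
  define pr where "pr x = (\<chi> i. if i \<in> P then x $ i else 0)" for x :: "'a ^ 'n"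
  define V where "V = pr ` A"
  define EP where "EP = {x::'a^'n. \<forall>i. i \<notin> P \<longrightarrow> x $ i = 0}"
  have finP: "finite P" by simp
  have subV: "vec.subspace V"
    unfolding vec.subspace_def V_def
  proof (intro conjI ballI allI)
    show "0 \<in> pr ` A" using vec.subspace_0[OF A]
      by (intro image_eqI[of _ _ 0]) (auto simp: pr_def vec_eq_iff)
  next
    fix x y assume "x \<in> pr ` A" "y \<in> pr ` A"
    then obtain a b where "a \<in> A" "b \<in> A" "x = pr a" "y = pr b" by auto
    then show "x + y \<in> pr ` A" using vec.subspace_add[OF A]
      by (intro image_eqI[of _ _ "a + b"]) (auto simp: pr_def vec_eq_iff)
  next
    fix c x assume "x \<in> pr ` A"
    then obtain a where "a \<in> A" "x = pr a" by auto
    then show "c *s x \<in> pr ` A" using vec.subspace_scale[OF A]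
      by (intro image_eqI[of _ _ "c *s a"]) (auto simp: pr_def vec_eq_iff)
  qed
  have subE: "vec.subspace EP" unfolding EP_def vec.subspace_def by auto
  have VE: "V \<subseteq> EP" unfolding V_def EP_def pr_def by auto
  have ax: "axis j 1 \<in> EP" using jP unfolding EP_def by (auto simp: axis_def)
  have axV: "axis j (1::'a) \<notin> V"
  proof
    assume "axis j (1::'a) \<in> V"
    then obtain a where a: "a \<in> A" "pr a = axis j 1" unfolding V_def by auto
    have "a $ j = 1" using arg_cong[OF a(2), of "\<lambda>v. v $ j"] jP by (simp add: pr_def axis_def)
    moreover have "\<forall>k\<in>P-{j}. a $ k = 0"
      using a(2) by (auto simp: pr_def axis_def vec_eq_iff split: if_splits)
    ultimately show False using H a(1) by auto
  qed
  have "vec.dim V < vec.dim EP"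
  proof (rule vec.dim_psubset)
    have e1: "vec.span V = V" and e2: "vec.span EP = EP" using subV subE vec.span_eq_iff by blast+
    show "vec.span V \<subset> vec.span EP" unfolding e1 e2 using VE ax axV by blast
  qed
  also have dEP: "vec.dim EP = card P" unfolding EP_def by (rule dim_substandard_cart)
  finally have dimV: "vec.dim V < card P" .
  obtain W where W: "W \<subseteq> V" "vec.independent W" "V \<subseteq> vec.span W" "card W = vec.dim V"
    using vec.basis_exists by blast
  have "vec.dim EP \<le> vec.dim (EP \<inter> {a. \<forall>w\<in>W. dotp a w = 0}) + card W"
    by (rule L[OF _ subE]) (rule vec.finiteI_independent[OF W(2)])
  then have "vec.dim (EP \<inter> {a. \<forall>w\<in>W. dotp a w = 0}) \<noteq> 0"
    using dimV W(4) dEP by linarith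
  then obtain x where x: "x \<in> EP" "\<forall>w\<in>W. dotp x w = 0" "x \<noteq> 0"
    unfolding vec.dim_eq_0 by blast
  have "x \<in> dual_code A"
    unfolding dual_code_def
  proof (intro CollectI ballI)
    fix a assume a: "a \<in> A"
    have "dotp x a = dotp x (pr a)"
      unfolding dotp_def pr_def using x(1) unfolding EP_def
      by (intro sum.cong) auto
    also have "\<dots> = 0"
      using dotp_span_zero[of "pr a" W x] W(3) a x(2) unfolding V_def by auto
    finally show "dotp x a = 0" .
  qed
  then have "min_dist (dual_code A) \<le> enat (weight x)"
    unfolding min_dist_def using x(3) by (intro INF_lower) auto
  moreover have "supp x \<subseteq> P" using x(1) unfolding supp_def EP_def by auto
  then have "weight x \<le> card P" unfolding weight_def by (simp add: card_mono)
  then have "enat (weight x) \<le> enat t" using cP by simp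
  ultimately have "min_dist (dual_code A) \<le> enat t" by (rule order.trans)
  then show False using md by simp
qed

lemma L2:
  fixes S :: "('a::field ^ 'n) set"
  assumes S: "vec.subspace S" and u0: "u0 \<in> S" "u0 $ j \<noteq> 0"
  shows "vec.dim (S \<inter> {a. a $ j = 0}) + 1 \<le> vec.dim S"
proof -
  let ?S' = "S \<inter> {a. a $ j = 0}"
  have "vec.subspace {a::'a^'n. a $ j = 0}" unfolding vec.subspace_def by simp
  then have "vec.subspace ?S'" using S by (rule vec.subspace_inter[rotated])
  then have e: "vec.span ?S' = ?S'" by (rule vec.span_eq_iff[THEN iffD2])
  have "u0 \<notin> ?S'" using u0(2) by blast
  then have "u0 \<notin> vec.span ?S'" unfolding e .
  then have "vec.dim (insert u0 ?S') = vec.dim ?S' + 1" by (simp only: vec.dim_insert if_False)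
  moreover have "insert u0 ?S' \<subseteq> S" using u0(1) by blast
  then have "vec.dim (insert u0 ?S') \<le> vec.dim S" by (rule vec.dim_subset)
  ultimately show ?thesis by linarith
qed

lemma subspace_shortened:
  assumes A: "vec.subspace (A :: ('a::field ^ 'n) set)"
  shows "vec.subspace (shortened A K)"
  unfolding vec.subspace_def
proof (intro conjI ballI allI)
  show "0 \<in> shortened A K" using vec.subspace_0[OF A] unfolding shortened_def by simp
next
  fix x y assume "x \<in> shortened A K" "y \<in> shortened A K"
  then show "x + y \<in> shortened A K" using vec.subspace_add[OF A] unfolding shortened_def by simp
next
  fix c x assume "x \<in> shortened A K"
  then show "c *s x \<in> shortened A K" using vec.subspace_scale[OF A] unfolding shortened_def by simp
qed

lemma P2:
  fixes A :: "('a::field ^ 'n) set"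
  assumes A: "vec.subspace A" and md: "enat t < min_dist (dual_code A)"
    and cJ: "card J \<le> t"
  shows "vec.dim (shortened A J) + card J \<le> vec.dim A"
proof -
  have "finite J" by simp
  have "finite K \<Longrightarrow> K \<subseteq> J \<Longrightarrow> vec.dim (shortened A K) + card K \<le> vec.dim A" for K
  proof (induction K rule: finite_induct)
    case empty
    have "shortened A {} = A" unfolding shortened_def by auto
    then show ?case by simp
  next
    case (insert j K)
    have cP: "card (insert j K) \<le> t"
      using card_mono[OF \<open>finite J\<close> "insert.prems"] cJ by linarith
    obtain a where a: "a \<in> A" "a $ j \<noteq> 0" "\<forall>k\<in>insert j K - {j}. a $ k = 0"
      using E[OF A md cP, of j] by auto
    have aK: "a \<in> shortened A K" using a insert(2) unfolding shortened_def by auto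
    have eq: "shortened A (insert j K) = shortened A K \<inter> {a. a $ j = 0}"
      unfolding shortened_def by auto
    have "vec.dim (shortened A (insert j K)) + 1 \<le> vec.dim (shortened A K)"
      unfolding eq by (rule L2[OF subspace_shortened[OF A] aK a(2)])
    moreover have "K \<subseteq> J" using "insert.prems" by auto
    then have "vec.dim (shortened A K) + card K \<le> vec.dim A" by (rule "insert.IH")
    moreover have "card (insert j K) = card K + 1" using insert(1,2) by simp
    ultimately show ?case by linarith
  qed
  then show ?thesis by simp
qed

theorem theorem3p6:
  fixes C A B :: "('a::{field,finite} ^ 'n) set"
    and t :: nat and c e y :: "'a ^ 'n"
  assumes "vec.subspace C" "vec.subspace A" "vec.subspace B"
    and "schur_codes A B \<subseteq> dual_code C"
    and "vec.dim A > t"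
    and "enat t < min_dist (dual_code A)"
    and "min_dist A + min_dist C > enat CARD('n)"
    and "c \<in> C" and "weight e = t" and "y = c + e"
    and "shortened A (supp e) =
           {a \<in> A. \<forall>b\<in>B. dotp (schur a y) b = 0}
         \<inter> {a \<in> A. \<forall>v\<in>dual_code (schur_codes (dual_code B) C).
                      dotp (schur a (schur y y)) v = 0}"
  shows "vec.dim B + vec.dim (dual_code (schur_codes (dual_code B) C)) \<ge> t"
proof -
  define D where "D = dual_code (schur_codes (dual_code B) C)"
  define J where "J = supp e"
  have cJ: "card J = t" using assms(9) unfolding J_def weight_def by simp
  have p2: "vec.dim (shortened A J) + t \<le> vec.dim A"
    using P2[OF assms(2) assms(6), of J] cJ by simp
  obtain BB where BB: "BB \<subseteq> B" "vec.independent BB" "B \<subseteq> vec.span BB" "card BB = vec.dim B"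
    by (rule vec.basis_exists)
  obtain DD where DD: "DD \<subseteq> D" "vec.independent DD" "D \<subseteq> vec.span DD" "card DD = vec.dim D"
    by (rule vec.basis_exists)
  define W where "W = schur y ` BB \<union> schur (schur y y) ` DD"
  have finW: "finite W" by simp
  have cW: "card W \<le> vec.dim B + vec.dim D"
  proof -
    have "card W \<le> card (schur y ` BB) + card (schur (schur y y) ` DD)"
      unfolding W_def by (rule card_Un_le)
    also have "\<dots> \<le> card BB + card DD" by (intro add_mono card_image_le) auto
    finally show ?thesis using BB(4) DD(4) by simp
  qed
  have Meq: "shortened A J = A \<inter> {a. \<forall>w\<in>W. dotp a w = 0}"
  proof -
    have "{a \<in> A. \<forall>b\<in>B. dotp (schur a y) b = 0} = A \<inter> {a. \<forall>w\<in>schur y ` BB. dotp a w = 0}"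
    proof (intro set_eqI iffI)
      fix a assume "a \<in> {a \<in> A. \<forall>b\<in>B. dotp (schur a y) b = 0}"
      then show "a \<in> A \<inter> {a. \<forall>w\<in>schur y ` BB. dotp a w = 0}"
        using BB(1) by (auto simp: dotp_schur)
    next
      fix a assume a: "a \<in> A \<inter> {a. \<forall>w\<in>schur y ` BB. dotp a w = 0}"
      have "dotp (schur a y) b = 0" if "b \<in> B" for b
        using dotp_span_zero[of b BB "schur a y"] that BB(3) a by (auto simp: dotp_schur)
      then show "a \<in> {a \<in> A. \<forall>b\<in>B. dotp (schur a y) b = 0}" using a by auto
    qed
    moreover have "{a \<in> A. \<forall>v\<in>D. dotp (schur a (schur y y)) v = 0}
       = A \<inter> {a. \<forall>w\<in>schur (schur y y) ` DD. dotp a w = 0}"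
    proof (intro set_eqI iffI)
      fix a assume "a \<in> {a \<in> A. \<forall>v\<in>D. dotp (schur a (schur y y)) v = 0}"
      then show "a \<in> A \<inter> {a. \<forall>w\<in>schur (schur y y) ` DD. dotp a w = 0}"
        using DD(1) by (auto simp: dotp_schur)
    next
      fix a assume a: "a \<in> A \<inter> {a. \<forall>w\<in>schur (schur y y) ` DD. dotp a w = 0}"
      have "dotp (schur a (schur y y)) b = 0" if "b \<in> D" for b
        using dotp_span_zero[of b DD "schur a (schur y y)"] that DD(3) a by (auto simp: dotp_schur)
      then show "a \<in> {a \<in> A. \<forall>v\<in>D. dotp (schur a (schur y y)) v = 0}" using a by auto
    qed
    moreover have "(A \<inter> {a. \<forall>w\<in>schur y ` BB. dotp a w = 0}) \<inter> (A \<inter> {a. \<forall>w\<in>schur (schur y y) ` DD. dotp a w = 0})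
       = A \<inter> {a. \<forall>w\<in>W. dotp a w = 0}" unfolding W_def by blast
    moreover have "shortened A J = {a \<in> A. \<forall>b\<in>B. dotp (schur a y) b = 0} \<inter> {a \<in> A. \<forall>v\<in>D. dotp (schur a (schur y y)) v = 0}"
      using assms(11) unfolding J_def D_def .
    ultimately show ?thesis by simp
  qed
  have "vec.dim A \<le> vec.dim (shortened A J) + card W"
    unfolding Meq by (rule L[OF finW assms(2)])
  then show ?thesis using p2 cW unfolding D_def by linarith
qed

end
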